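(* For every nonnegative integer $n$, $$\sum_{k=0}^{\infty}(-1)^k(4k+1)\,\frac{(-4n)_k\,(-3n+\tfrac18)_k\,(\tfrac12)_k}{k!\,(3n+\tfrac{11}{8})_k\,(4n+\tfrac32)_k}=\left(\frac{2^8 3^3}{7^7}\right)^n\frac{(\tfrac{11}{24})_n(\tfrac38)_n(\tfrac78)_n(\tfrac{19}{24})_n(\tfrac98)_n^2}{(\tfrac{11}{56})_n(\tfrac{43}{56})_n(\tfrac{19}{56})_n(\tfrac{51}{56})_n(\tfrac{27}{56})_n(\tfrac{59}{56})_n}.$$ (The sum is finite, since $(-4n)_k=0$ for $k>4n$.)
   Context: $(a)_j=\Gamma(a+j)/\Gamma(a)=a(a+1)\cdots(a+j-1)$ denotes the rising factorial (Pochhammer symbol), with $(a)_0=1$. *)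

theory Defs
  imports Complex_Main
begin

end

theory Submission
  imports Defs
begin


definition TT :: "real \<Rightarrow> real \<Rightarrow> nat \<Rightarrow> nat \<Rightarrow> real" where
"TT a c N k = (-1)^k * ((a+2*real k)/a) * (pochhammer a k * pochhammer (- real N) k * pochhammer c k)
   / (fact k * pochhammer (1+a+real N) k * pochhammer (1+a-c) k)"

definition GG :: "real \<Rightarrow> real \<Rightarrow> nat \<Rightarrow> nat \<Rightarrow> real" where
"GG a c N k = - ((-1)^k * pochhammer a k * pochhammer (- real N - 1) k * pochhammer c k * (a-c+real k) * real k
   / (fact k * pochhammer (1+a+real N) k * pochhammer (1+a-c) k * a * (real N+1)))"

lemma key:
  fixes a c :: real assumes a: "a > 0" and ac: "1+a-c > 0"
  shows "(1+a-c+real N)/(1+a+real N) * TT a c (Suc N) k - TT a c N k = GG a c N (Suc k) - GG a c N k"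
proof -
  define A where "A = pochhammer a k"
  define B where "B = pochhammer (- real N - 1) k"
  define C where "C = pochhammer c k"
  define D where "D = pochhammer (2+a+real N) k"
  define E where "E = pochhammer (1+a-c) k"
  define K where "K = (fact k :: real)"
  have Dp: "D > 0" unfolding D_def using a by (intro pochhammer_pos) auto
  have Ep: "E > 0" unfolding E_def using ac by (intro pochhammer_pos) auto
  have Kp: "K > 0" unfolding K_def by simp
  have hB: "pochhammer (- real N) k = B * (real N + 1 - real k) / (real N + 1)"
  proof -
    have "pochhammer (- real N - 1) (Suc k) = (- real N - 1) * pochhammer (- real N) k"
      by (simp add: pochhammer_rec)
    moreover have "pochhammer (- real N - 1) (Suc k) = B * (- real N - 1 + real k)"
      by (simp add: pochhammer_Suc B_def)
    ultimately show ?thesis by (simp add: field_simps)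
  qed
  have hD1: "pochhammer (1+a+real N) (Suc k) = (1+a+real N) * D"
      by (simp add: pochhammer_rec D_def add_ac)
  have hD: "pochhammer (1+a+real N) k = (1+a+real N) * D / (1+a+real N+real k)"
  proof -
    note hD1
    moreover have "pochhammer (1+a+real N) (Suc k) = pochhammer (1+a+real N) k * (1+a+real N+real k)"
      by (simp add: pochhammer_Suc)
    ultimately show ?thesis using a by (simp add: field_simps)
  qed
  have eB: "pochhammer (- real (Suc N)) k = B"
    unfolding B_def by (rule arg_cong[where f="\<lambda>x. pochhammer x k"]) simp
  have t1: "TT a c (Suc N) k = (-1)^k * ((a+2*real k)/a) * (A * B * C) / (K * D * E)"
    unfolding TT_def eB unfolding A_def C_def D_def E_def K_def by (simp add: add_ac)
  have t2: "TT a c N k = (-1)^k * ((a+2*real k)/a) * (A * (B * (real N + 1 - real k) / (real N + 1)) * C)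
      / (K * ((1+a+real N) * D / (1+a+real N+real k)) * E)"
    unfolding TT_def hB hD A_def B_def C_def D_def E_def K_def by simp
  have g1: "GG a c N (Suc k) = - ((-1)^(Suc k) * (A*(a+real k)) * (B*(- real N - 1 + real k)) * (C*(c+real k)) * (a-c+real k+1) * (real k+1)
   / ((K * (real k+1)) * ((1+a+real N)*D) * (E*(1+a-c+real k)) * a * (real N+1)))"
    unfolding GG_def hD1 unfolding A_def B_def C_def E_def K_def
    by (simp add: pochhammer_Suc)
  have g2: "GG a c N k = - ((-1)^k * A * B * C * (a-c+real k) * real k
   / (K * ((1+a+real N) * D / (1+a+real N+real k)) * E * a * (real N+1)))"
    unfolding GG_def hD A_def B_def C_def D_def E_def K_def by simp
  have nz: "1+a+real N \<noteq> 0" "1+a+real N+real k \<noteq> 0" "real N + 1 \<noteq> 0" "1+a-c+real k \<noteq> 0" "a \<noteq> 0"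
    "1 + real k \<noteq> 0"
    using a ac by linarith+
  define X where "X = (-1)^k * A * B * C / (K * D * E)"
  define n where "n = real N"
  define j where "j = real k"
  have r1: "TT a c (Suc N) k = X * ((a+2*j)/a)" unfolding t1 X_def j_def using nz Dp Ep Kp by (simp add: field_simps; simp add: algebra_simps)
  have r2: "TT a c N k = X * ((a+2*j)/a * (n+1-j)/(n+1) * (1+a+n+j)/(1+a+n))"
    unfolding t2 X_def j_def n_def using nz Dp Ep Kp by (simp add: field_simps; simp add: algebra_simps)
  have aux3: "\<And>p q r s t u v w. t\<noteq>0 \<Longrightarrow> u\<noteq>0 \<Longrightarrow> v\<noteq>0 \<Longrightarrow> w\<noteq>0 \<Longrightarrow>
     - ((-1)^(Suc k) * (A*p) * (B*q) * (C*r) * s * t / ((K*t) * (u*D) * (E*v) * a * w)) = X * (p*q*r*s*t/(t*u*v*a*w))"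
    unfolding X_def using Dp Ep Kp nz by (simp add: field_simps)
  have aux4: "\<And>s t u v w. u\<noteq>0 \<Longrightarrow> v\<noteq>0 \<Longrightarrow> w\<noteq>0 \<Longrightarrow>
     - ((-1)^k * A * B * C * s * t / (K * (u * D / v) * E * a * w)) = X * (-t*s*v/(u*a*w))"
    unfolding X_def using Dp Ep Kp nz by (simp add: field_simps)
  have r3: "GG a c N (Suc k) = X * ((a+j)*(-n-1+j)*(c+j)*(a-c+j+1)*(j+1)/((j+1)*(1+a+n)*(1+a-c+j)*a*(n+1)))"
    unfolding g1 j_def n_def by (rule aux3) (use nz in auto)
  have r4: "GG a c N k = X * (-j*(a-c+j)*(1+a+n+j)/((1+a+n)*a*(n+1)))"
    unfolding g2 j_def n_def by (rule aux4) (use nz in auto)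
  have nz2: "1+a+n \<noteq> 0" "1+a+n+j \<noteq> 0" "n + 1 \<noteq> 0" "1+a-c+j \<noteq> 0" "a \<noteq> 0" "j+1 \<noteq> 0"
    using nz unfolding n_def j_def by (auto simp: add_ac)
  have rat: "\<And>u w z y. u = 1+a+n \<Longrightarrow> w = n+1 \<Longrightarrow> z = 1+a-c+j \<Longrightarrow> y = j+1 \<Longrightarrow>
     u \<noteq> 0 \<Longrightarrow> w \<noteq> 0 \<Longrightarrow> z \<noteq> 0 \<Longrightarrow> y \<noteq> 0 \<Longrightarrow>
     (1+a-c+n)/u * ((a+2*j)/a) - ((a+2*j)/a * (n+1-j)/w * (1+a+n+j)/u)
     = ((a+j)*(-n-1+j)*(c+j)*(a-c+j+1)*(j+1)/(y*u*z*a*w)) - (-j*(a-c+j)*(1+a+n+j)/(u*a*w))"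
  proof -
    fix u w z y assume h: "u = 1+a+n" "w = n+1" "z = 1+a-c+j" "y = j+1"
      and nz3: "u \<noteq> 0" "w \<noteq> 0" "z \<noteq> 0" "y \<noteq> 0"
    have P: "(1+a-c+n) * (a+2*j) * y * z * w - (a+2*j) * (n+1-j) * (1+a+n+j) * y * z
        = (a+j)*(-n-1+j)*(c+j)*(a-c+j+1)*(j+1) + j*(a-c+j)*(1+a+n+j) * y * z"
      by (simp only: h) (simp add: algebra_simps)
    have e1: "((1+a-c+n)/u * ((a+2*j)/a) - ((a+2*j)/a * (n+1-j)/w * (1+a+n+j)/u)) * (y*u*z*a*w)
       = (1+a-c+n) * (a+2*j) * y * z * w - (a+2*j) * (n+1-j) * (1+a+n+j) * y * z"
      using nz3 nz2(5) by (simp add: field_simps)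
    have e2: "(((a+j)*(-n-1+j)*(c+j)*(a-c+j+1)*(j+1)/(y*u*z*a*w)) - (-j*(a-c+j)*(1+a+n+j)/(u*a*w))) * (y*u*z*a*w)
       = (a+j)*(-n-1+j)*(c+j)*(a-c+j+1)*(j+1) + j*(a-c+j)*(1+a+n+j) * y * z"
      using nz3 nz2(5) by (simp add: field_simps)
    have "y*u*z*a*w \<noteq> 0" using nz3 nz2(5) by simp
    then show "(1+a-c+n)/u * ((a+2*j)/a) - ((a+2*j)/a * (n+1-j)/w * (1+a+n+j)/u)
     = ((a+j)*(-n-1+j)*(c+j)*(a-c+j+1)*(j+1)/(y*u*z*a*w)) - (-j*(a-c+j)*(1+a+n+j)/(u*a*w))"
      using e1 e2 P by (metis mult_right_cancel)
  qed
  have "(1+a-c+n)/(1+a+n) * ((a+2*j)/a) - ((a+2*j)/a * (n+1-j)/(n+1) * (1+a+n+j)/(1+a+n))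
     = ((a+j)*(-n-1+j)*(c+j)*(a-c+j+1)*(j+1)/((j+1)*(1+a+n)*(1+a-c+j)*a*(n+1))) - (-j*(a-c+j)*(1+a+n+j)/((1+a+n)*a*(n+1)))"
    by (rule rat) (use nz2 in auto)
  then have "X * ((1+a-c+n)/(1+a+n) * ((a+2*j)/a) - ((a+2*j)/a * (n+1-j)/(n+1) * (1+a+n+j)/(1+a+n)))
     = X * (((a+j)*(-n-1+j)*(c+j)*(a-c+j+1)*(j+1)/((j+1)*(1+a+n)*(1+a-c+j)*a*(n+1))) - (-j*(a-c+j)*(1+a+n+j)/((1+a+n)*a*(n+1))))"
    by (rule arg_cong)
  then show ?thesis unfolding r1 r2 r3 r4 n_def[symmetric] by (simp only: right_diff_distrib mult.left_commute)
qed
lemma TT_zero: "k > N \<Longrightarrow> TT a c N k = 0"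
  unfolding TT_def using pochhammer_of_nat_eq_0_lemma[of N k, where 'a=real] by simp

lemma GG_zero: "GG a c N 0 = 0" "GG a c N (Suc (Suc N)) = 0"
proof -
  show "GG a c N 0 = 0" unfolding GG_def by simp
  have h: "- real N - 1 = - of_nat (Suc N)" by simp
  have "pochhammer (- real N - 1) (Suc (Suc N)) = pochhammer (- of_nat (Suc N)) (Suc (Suc N))"
    by (simp only: h)
  also have "\<dots> = 0" by (rule pochhammer_of_nat_eq_0_lemma) simp
  finally have "pochhammer (- real N - 1) (Suc (Suc N)) = 0" .
  then show "GG a c N (Suc (Suc N)) = 0" unfolding GG_def by simp
qed

lemma wsum:
  fixes a c :: real assumes a: "a > 0" and ac: "1+a-c > 0"
  shows "(\<Sum>k\<le>N. TT a c N k) = pochhammer (1+a) N / pochhammer (1+a-c) N"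
proof (induction N)
  case 0
  then show ?case using a by (simp add: TT_def)
next
  case (Suc N)
  define c1 where "c1 = (1+a-c+real N)/(1+a+real N)"
  have "(\<Sum>k<Suc (Suc N). c1 * TT a c (Suc N) k - TT a c N k) = (\<Sum>k<Suc (Suc N). GG a c N (Suc k) - GG a c N k)"
    using key[OF a ac] unfolding c1_def by simp
  also have "\<dots> = 0" by (simp only: sum_lessThan_telescope GG_zero)
  finally have "c1 * (\<Sum>k\<le>Suc N. TT a c (Suc N) k) = (\<Sum>k\<le>Suc N. TT a c N k)"
    by (simp add: sum_subtractf sum_distrib_left lessThan_Suc_atMost distrib_left)
  also have "\<dots> = (\<Sum>k\<le>N. TT a c N k)" using TT_zero[of N "Suc N"] by simp
  finally have e: "c1 * (\<Sum>k\<le>Suc N. TT a c (Suc N) k) = pochhammer (1+a) N / pochhammer (1+a-c) N"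
    using Suc by simp
  have p1: "pochhammer (1+a-c) N > 0" using ac by (intro pochhammer_pos) simp
  have c1nz: "c1 \<noteq> 0" unfolding c1_def using a ac by (simp add: field_simps)
  have "(\<Sum>k\<le>Suc N. TT a c (Suc N) k) = pochhammer (1+a) N / pochhammer (1+a-c) N / c1"
    using e c1nz by (metis nonzero_mult_div_cancel_left)
  also have "\<dots> = pochhammer (1+a) (Suc N) / pochhammer (1+a-c) (Suc N)"
    unfolding c1_def pochhammer_Suc using a ac p1 by (simp add: field_simps)
  finally show ?case .
qed


definition RR :: "nat \<Rightarrow> real" where
"RR n = (((2^8 * 3^3) / 7^7 :: real) ^ n *
           (pochhammer (11/24) n * pochhammer (3/8) n * pochhammer (7/8) n * pochhammer (19/24) n
             * (pochhammer (9/8) n) ^ 2)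
           / (pochhammer (11/56) n * pochhammer (43/56) n * pochhammer (19/56) n
             * pochhammer (51/56) n * pochhammer (27/56) n * pochhammer (59/56) n))"

lemma ratid:
  fixes x :: real assumes x: "x \<ge> 0"
  shows "((3/2+4*x)*(5/2+4*x)*(7/2+4*x)*(9/2+4*x)) * ((3*x+11/8)*(3*x+19/8)*(3*x+27/8))
     / ((7*x+11/8)*(7*x+19/8)*(7*x+27/8)*(7*x+35/8)*(7*x+43/8)*(7*x+51/8)*(7*x+59/8))
   = (2^8 * 3^3) / 7^7 * ((11/24+x)*(3/8+x)*(7/8+x)*(19/24+x)*(9/8+x)^2)
     / ((11/56+x)*(43/56+x)*(19/56+x)*(51/56+x)*(27/56+x)*(59/56+x))"
proof -
  have n: "((3/2+4*x)*(5/2+4*x)*(7/2+4*x)*(9/2+4*x)) * ((3*x+11/8)*(3*x+19/8)*(3*x+27/8))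
     = ((2^8 * 3^3) * ((11/24+x)*(3/8+x)*(7/8+x)*(19/24+x)*(9/8+x)^2)) * (5/8+x)"
    by (simp add: field_simps power2_eq_square)
  have d: "(7*x+11/8)*(7*x+19/8)*(7*x+27/8)*(7*x+35/8)*(7*x+43/8)*(7*x+51/8)*(7*x+59/8)
     = (7^7 * ((11/56+x)*(43/56+x)*(19/56+x)*(51/56+x)*(27/56+x)*(59/56+x))) * (5/8+x)"
    by (simp add: field_simps)
  have "5/8+x \<noteq> 0" using x by simp
  then show ?thesis unfolding n d mult_divide_mult_cancel_right by simp
qed

lemma RR_Suc: "RR (Suc n) = RR n * ((2^8 * 3^3) / 7^7 * ((11/24+real n)*(3/8+real n)*(7/8+real n)*(19/24+real n)*(9/8+real n)^2)
     / ((11/56+real n)*(43/56+real n)*(19/56+real n)*(51/56+real n)*(27/56+real n)*(59/56+real n)))"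
  unfolding RR_def pochhammer_Suc by (simp add: field_simps power2_eq_square)

lemma prodid: "pochhammer (3/2::real) (4*n) / pochhammer (3*real n+11/8) (4*n) = RR n"
proof (induction n)
  case 0 then show ?case by (simp add: RR_def)
next
  case (Suc n)
  define x where "x = real n"
  have x0: "x \<ge> 0" unfolding x_def by simp
  have A1: "pochhammer (3/2::real) (4*Suc n) = pochhammer (3/2) (4*n) * ((3/2+4*x)*(5/2+4*x)*(7/2+4*x)*(9/2+4*x))"
  proof -
    have "pochhammer (3/2::real) (4*Suc n) = pochhammer (3/2) (4*n + 4)" by (simp add: add.commute)
    also have "\<dots> = pochhammer (3/2) (4*n) * pochhammer (3/2 + real (4*n)) 4" by (rule pochhammer_product')
    finally show ?thesis unfolding x_def by (simp add: eval_nat_numeral pochhammer_Suc field_simps)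
  qed
  have A2: "pochhammer (3*real (Suc n)+11/8) (4*Suc n) * ((3*x+11/8)*(3*x+19/8)*(3*x+27/8))
      = pochhammer (3*x+11/8) (4*n) * ((7*x+11/8)*(7*x+19/8)*(7*x+27/8)*(7*x+35/8)*(7*x+43/8)*(7*x+51/8)*(7*x+59/8))"
  proof -
    have "pochhammer (3*x+11/8) (3 + 4*Suc n) = pochhammer (3*x+11/8) 3 * pochhammer (3*x+11/8 + real 3) (4*Suc n)"
      by (rule pochhammer_product')
    moreover have "pochhammer (3*x+11/8) (4*n + 7) = pochhammer (3*x+11/8) (4*n) * pochhammer (3*x+11/8 + real (4*n)) 7"
      by (rule pochhammer_product')
    moreover have "3 + 4*Suc n = 4*n+7" by simp
    moreover have "3*x+11/8 + real 3 = 3*real (Suc n)+11/8" unfolding x_def by simp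
    ultimately have "pochhammer (3*x+11/8) 3 * pochhammer (3*real (Suc n)+11/8) (4*Suc n)
       = pochhammer (3*x+11/8) (4*n) * pochhammer (3*x+11/8 + real (4*n)) 7" by metis
    then show ?thesis unfolding x_def by (simp add: eval_nat_numeral pochhammer_Suc field_simps)
  qed
  have pos1: "pochhammer (3*x+11/8) (4*n) > 0" using x0 by (intro pochhammer_pos) simp
  have pos2: "pochhammer (3*real (Suc n)+11/8) (4*Suc n) > 0" by (intro pochhammer_pos) simp
  have gen: "\<And>p q a b c::real. c \<noteq> 0 \<Longrightarrow> q \<noteq> 0 \<Longrightarrow> b \<noteq> 0 \<Longrightarrow> (p*a)/(q*b/c) = p/q*(a*c/b)"
    by (simp add: field_simps)
  have Cnz: "(3*x+11/8)*(3*x+19/8)*(3*x+27/8) \<noteq> 0" using x0 by (intro no_zero_divisors) auto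
  have Bnz: "(7*x+11/8)*(7*x+19/8)*(7*x+27/8)*(7*x+35/8)*(7*x+43/8)*(7*x+51/8)*(7*x+59/8) \<noteq> 0"
    using x0 by (intro no_zero_divisors) auto
  have A2': "pochhammer (3*real (Suc n)+11/8) (4*Suc n) = pochhammer (3*x+11/8) (4*n) * ((7*x+11/8)*(7*x+19/8)*(7*x+27/8)*(7*x+35/8)*(7*x+43/8)*(7*x+51/8)*(7*x+59/8))
      / ((3*x+11/8)*(3*x+19/8)*(3*x+27/8))"
    using A2 Cnz by (simp add: eq_divide_eq)
  have "pochhammer (3/2::real) (4*Suc n) / pochhammer (3*real (Suc n)+11/8) (4*Suc n)
     = pochhammer (3/2) (4*n) / pochhammer (3*x+11/8) (4*n) *
       (((3/2+4*x)*(5/2+4*x)*(7/2+4*x)*(9/2+4*x)) * ((3*x+11/8)*(3*x+19/8)*(3*x+27/8))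
     / ((7*x+11/8)*(7*x+19/8)*(7*x+27/8)*(7*x+35/8)*(7*x+43/8)*(7*x+51/8)*(7*x+59/8)))"
    unfolding A1 A2' by (rule gen) (use Cnz Bnz pos1 in auto)
  also have "\<dots> = RR (Suc n)"
  proof -
    have IH': "pochhammer (3/2::real) (4*n) / pochhammer (3*x+11/8) (4*n) = RR n" using Suc.IH unfolding x_def .
    show ?thesis unfolding ratid[OF x0] IH' unfolding RR_Suc x_def ..
  qed
  finally show ?case .
qed

theorem theorem10:
  fixes n :: nat
  shows "(\<lambda>k. (-1) ^ k * (4 * real k + 1) *
            (pochhammer (- 4 * real n) k * pochhammer (- 3 * real n + 1/8) k * pochhammer (1/2) k)
          / (fact k * pochhammer (3 * real n + 11/8) k * pochhammer (4 * real n + 3/2) k))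
         sums
         (((2^8 * 3^3) / 7^7 :: real) ^ n *
           (pochhammer (11/24) n * pochhammer (3/8) n * pochhammer (7/8) n * pochhammer (19/24) n
             * (pochhammer (9/8) n) ^ 2)
           / (pochhammer (11/56) n * pochhammer (43/56) n * pochhammer (19/56) n
             * pochhammer (51/56) n * pochhammer (27/56) n * pochhammer (59/56) n))"
proof -
  define c :: real where "c = - 3 * real n + 1/8"
  have h1: "- real (4*n) = - 4 * real n" by simp
  have h2: "1 + 1/2 + real (4*n) = 4 * real n + 3/2" by simp
  have h3: "1 + 1/2 - c = 3 * real n + 11/8" unfolding c_def by simp
  have h4: "(1/2 + 2 * real k) / (1/2) = 4 * real k + (1::real)" for k by simp
  have eq: "(-1) ^ k * (4 * real k + 1) *
            (pochhammer (- 4 * real n) k * pochhammer (- 3 * real n + 1/8) k * pochhammer (1/2) k)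
          / (fact k * pochhammer (3 * real n + 11/8) k * pochhammer (4 * real n + 3/2) k)
        = (if k \<in> {..4*n} then TT (1/2) c (4*n) k else 0)" for k
  proof -
    have "TT (1/2) c (4*n) k = (-1) ^ k * (4 * real k + 1) *
            (pochhammer (- 4 * real n) k * pochhammer (- 3 * real n + 1/8) k * pochhammer (1/2) k)
          / (fact k * pochhammer (3 * real n + 11/8) k * pochhammer (4 * real n + 3/2) k)"
      unfolding TT_def h1 h2 h3 h4 unfolding c_def by (simp only: mult_ac)
    then show ?thesis using TT_zero[of "4*n" k "1/2" c] by auto
  qed
  have "(\<lambda>k. if k \<in> {..4*n} then TT (1/2) c (4*n) k else 0) sums (\<Sum>k\<in>{..4*n}. TT (1/2) c (4*n) k)"
    by (rule sums_If_finite_set) simp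
  moreover have "(\<Sum>k\<in>{..4*n}. TT (1/2) c (4*n) k) = pochhammer (1+1/2) (4*n) / pochhammer (1+1/2-c) (4*n)"
    by (rule wsum) (simp_all add: c_def)
  moreover have "pochhammer (1+1/2) (4*n) / pochhammer (1+1/2-c) (4*n) = RR n"
    unfolding h3 using prodid[of n] by simp
  ultimately show ?thesis unfolding eq RR_def by simp
qed

end
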